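(* In the MAD-HTLC game described in the context, consider the last round, i.e. a subgame $G(T,s)$ for either $s\in\{\mathrm{red},\mathrm{irred}\}$. If $tx^{\mathrm{dep}}_{\mathcal{A}}$ and at least one of $tx^{\mathrm{dep}}_{\mathcal{B}}$ or $tx^{\mathrm{dc}}_{\mathcal{B}}$ have been published, then the miners' best-response strategy is not to include any of $\mathcal{A}$'s or $\mathcal{B}$'s transactions in this round.
   Context: Blockchain model: $n$ miners; miner $i$ has mining power $\lambda_i>0$, $\sum_i\lambda_i=1$. In each round exactly one miner is chosen, miner $i$ with probability $\lambda_i$, and creates a block containing one transaction of her choice, receiving its fee. An unrelated transaction offering the base fee $f$ is always available. Publishing a transaction reveals its contents (in particular preimages) to everyone. A contract can be redeemed by at most one confirmed transaction. All parties are rational and non-myopic, with utility the expected tokens owned at the end of the game. MAD-HTLC: preimages $pre_a,pre_b$ with digests $dig_a=H(pre_a)$, $dig_b=H(pre_b)$, chosen by $\mathcal{B}$; only $\mathcal{B}$ knows $pre_b$; $\mathcal{A}$ may know $pre_a$. Contracts initiated in block $b_j$ with timeout $T$: MH-Dep ($v^{\mathrm{dep}}$ tokens), redeemable via dep-A (signature of $\mathcal{A}$ and $pre_a$; any block), dep-B (signature of $\mathcal{B}$ and $pre_b$; only at least $T$ blocks after initiation), dep-M (both $pre_a,pre_b$; any block); MH-Col ($v^{\mathrm{col}}$ tokens), redeemable only at least $T$ blocks after initiation via col-B (signature of $\mathcal{B}$) or col-M (both $pre_a,pre_b$). Game: $T$ rounds creating $b_{j+1},\dots,b_{j+T}$;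 in each round $\mathcal{A},\mathcal{B}$ alternately publish transactions, then a random miner creates the block. Transactions: $tx^{\mathrm{dep}}_{\mathcal{A}}$ (MH-Dep via dep-A, fee $f<f^{\mathrm{dep}}_{\mathcal{A}}<v^{\mathrm{dep}}$); $tx^{\mathrm{dep}}_{\mathcal{B}}$ (MH-Dep via dep-B, fee $f<f^{\mathrm{dep}}_{\mathcal{B}}<v^{\mathrm{dep}}$); $tx^{\mathrm{col}}_{\mathcal{B}}$ (MH-Col via col-B, fee $f<f^{\mathrm{col}}_{\mathcal{B}}<v^{\mathrm{col}}$); $tx^{\mathrm{dc}}_{\mathcal{B}}$ (both, fee $f<f^{\mathrm{dc}}_{\mathcal{B}}<v^{\mathrm{dep}}+v^{\mathrm{col}}$). A miner may include an unrelated transaction (fee $f$), any currently valid published transaction, or, if both preimages were revealed by published transactions, her own transaction redeeming MH-Dep via dep-M (reward $v^{\mathrm{dep}}$, while MH-Dep is unredeemed), MH-Col via col-M (reward $v^{\mathrm{col}}$, last round only), or both (reward $v^{\mathrm{dep}}+v^{\mathrm{col}}$, last round, MH-Dep unredeemed). $G(k,s)$ denotes the subgame just before round $k\in[1,T]$ with MH-Dep redeemable ($s=\mathrm{red}$) or already redeemed ($s=\mathrm{irred}$). *)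

theory Defs
  imports Complex_Main
begin

record params =
  base_fee :: real
  v_dep :: real
  v_col :: real
  fee_dep_A :: real
  fee_dep_B :: real
  fee_col_B :: real
  fee_dc_B :: real
  timeout :: nat

definition valid_params :: "params \<Rightarrow> bool" where
  "valid_params p \<longleftrightarrow>
     timeout p \<ge> 1 \<and>
     base_fee p < fee_dep_A p \<and> fee_dep_A p < v_dep p \<and>
     base_fee p < fee_dep_B p \<and> fee_dep_B p < v_dep p \<and>
     base_fee p < fee_col_B p \<and> fee_col_B p < v_col p \<and>
     base_fee p < fee_dc_B p \<and> fee_dc_B p < v_dep p + v_col p"

datatype tx = TxDepA | TxDepB | TxColB | TxDC

text \<open>State of MH-Dep: redeemable or already redeemed.\<close>
datatype depstate = Red | Irred

datatype action =
    Unrelated          \<comment> \<open>unrelated transaction with base fee f\<close>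
  | Include tx
  | OwnDepM            \<comment> \<open>own tx redeeming MH-Dep via dep-M\<close>
  | OwnColM            \<comment> \<open>own tx redeeming MH-Col via col-M\<close>
  | OwnBoth            \<comment> \<open>own tx redeeming both via dep-M and col-M\<close>

fun tx_fee :: "params \<Rightarrow> tx \<Rightarrow> real" where
  "tx_fee p TxDepA = fee_dep_A p"
| "tx_fee p TxDepB = fee_dep_B p"
| "tx_fee p TxColB = fee_col_B p"
| "tx_fee p TxDC = fee_dc_B p"

fun reveals_pre_a :: "tx \<Rightarrow> bool" where
  "reveals_pre_a TxDepA = True"
| "reveals_pre_a _ = False"

fun reveals_pre_b :: "tx \<Rightarrow> bool" where
  "reveals_pre_b TxDepB = True"
| "reveals_pre_b TxDC = True"
| "reveals_pre_b _ = False"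

definition both_revealed :: "tx set \<Rightarrow> bool" where
  "both_revealed P \<longleftrightarrow> (\<exists>t\<in>P. reveals_pre_a t) \<and> (\<exists>t\<in>P. reveals_pre_b t)"

text \<open>Validity of a published transaction in round k (creating block b_{j+k})
  given the state s of MH-Dep. dep-B and col-B require at least T blocks after
  initiation, i.e. k \<ge> T. MH-Col can only be redeemed at k \<ge> T, so before the
  last round it is unredeemed.\<close>
fun tx_valid :: "params \<Rightarrow> nat \<Rightarrow> depstate \<Rightarrow> tx \<Rightarrow> bool" where
  "tx_valid p k s TxDepA = (s = Red)"
| "tx_valid p k s TxDepB = (s = Red \<and> k \<ge> timeout p)"
| "tx_valid p k s TxColB = (k \<ge> timeout p)"
| "tx_valid p k s TxDC = (s = Red \<and> k \<ge> timeout p)"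

fun available :: "params \<Rightarrow> nat \<Rightarrow> depstate \<Rightarrow> tx set \<Rightarrow> action \<Rightarrow> bool" where
  "available p k s P Unrelated = True"
| "available p k s P (Include t) = (t \<in> P \<and> tx_valid p k s t)"
| "available p k s P OwnDepM = (both_revealed P \<and> s = Red)"
| "available p k s P OwnColM = (both_revealed P \<and> k = timeout p)"
| "available p k s P OwnBoth = (both_revealed P \<and> k = timeout p \<and> s = Red)"

fun reward :: "params \<Rightarrow> action \<Rightarrow> real" where
  "reward p Unrelated = base_fee p"
| "reward p (Include t) = tx_fee p t"
| "reward p OwnDepM = v_dep p"
| "reward p OwnColM = v_col p"
| "reward p OwnBoth = v_dep p + v_col p"

text \<open>In the last round (k = T) the game ends after the block is created, so a
  miner's utility (expected tokens at the end of the game) from an action is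
  her current holdings plus the reward of the block; the best responses are
  the available actions maximising this utility.\<close>
definition last_round_utility :: "params \<Rightarrow> real \<Rightarrow> action \<Rightarrow> real" where
  "last_round_utility p holdings a = holdings + reward p a"

definition best_response_last ::
  "params \<Rightarrow> depstate \<Rightarrow> tx set \<Rightarrow> real \<Rightarrow> action \<Rightarrow> bool" where
  "best_response_last p s P holdings a \<longleftrightarrow>
     available p (timeout p) s P a \<and>
     (\<forall>b. available p (timeout p) s P b \<longrightarrow>
            last_round_utility p holdings b \<le> last_round_utility p holdings a)"

end

theory Submission
  imports Defs
begin

lemma avail_cases:
  "available p k s P b \<Longrightarrow> b = Unrelated \<or> (\<exists>t. b = Include t \<and> t \<in> P \<and> tx_valid p k s t)
    \<or> (b = OwnDepM \<and> s = Red) \<or> b = OwnColM \<or> (b = OwnBoth \<and> s = Red)"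
  by (cases b) auto

theorem lemma4:
  fixes p :: params and s :: depstate and P :: "tx set" and holdings :: real
  assumes "valid_params p"
    and "TxDepA \<in> P"
    and "TxDepB \<in> P \<or> TxDC \<in> P"
  shows "(\<exists>a. best_response_last p s P holdings a) \<and>
         (\<forall>a. best_response_last p s P holdings a \<longrightarrow> (\<forall>t. a \<noteq> Include t))"
proof -
  have br: "both_revealed P" using assms(2,3) unfolding both_revealed_def by force
  note vp = assms(1)[unfolded valid_params_def]
  show ?thesis
  proof
    show "\<exists>a. best_response_last p s P holdings a"
    proof (cases s)
      case Red
      define a where "a = (if v_col p \<ge> 0 \<and> v_dep p \<ge> 0 then OwnBoth
         else if v_dep p \<ge> v_col p then OwnDepM else OwnColM)"
      show ?thesis
        apply (rule exI[of _ a])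
        unfolding best_response_last_def last_round_utility_def a_def
        using br Red vp
        apply (auto split: if_splits)
        subgoal for b apply (cases b) apply auto
          subgoal for t by (cases t) auto
          done
        subgoal for b apply (cases b) apply auto
          subgoal for t by (cases t) auto
          done
        subgoal for b apply (cases b) apply auto
          subgoal for t by (cases t) auto
          done
        subgoal for b apply (cases b) apply auto
          subgoal for t by (cases t) auto
          done
        subgoal for b apply (cases b) apply auto
          subgoal for t by (cases t) auto
          done
        done
    next
      case Irred
      show ?thesis
        apply (rule exI[of _ OwnColM])
        unfolding best_response_last_def last_round_utility_def
        using br Irred vp
        apply auto
        subgoal for b apply (cases b) apply auto
          subgoal for t by (cases t) auto
          done
        done
    qed
  next
    show "\<forall>a. best_response_last p s P holdings a \<longrightarrow> (\<forall>t. a \<noteq> Include t)"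
    proof (intro allI impI)
      fix a t assume h: "best_response_last p s P holdings a"
      show "a \<noteq> Include t"
      proof
        assume a: "a = Include t"
        have av: "t \<in> P" "tx_valid p (timeout p) s t" using h a unfolding best_response_last_def by auto
        have le: "\<And>b. available p (timeout p) s P b \<Longrightarrow> reward p b \<le> tx_fee p t"
          using h a unfolding best_response_last_def last_round_utility_def by auto
        show False
        proof (cases t)
          case TxDepA
          then show ?thesis using le[of OwnDepM] av br vp by auto
        next
          case TxDepB
          then show ?thesis using le[of OwnDepM] av br vp by auto
        next
          case TxColB
          then show ?thesis using le[of OwnColM] av br vp by auto
        next
          case TxDC
          then show ?thesis using le[of OwnBoth] av br vp by auto
        qed
      qed
    qed
  qed
qed

end
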